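(* Let $p_1,\ldots,p_m\in[0,1]$ and $\alpha\in[0,1]$, and let $\mathcal{U}_\alpha$, $\mathcal{X}_\alpha$, $p_{(i:I)}$ and $h_\alpha$ be as in the context. Then for every $I\subseteq\{1,\ldots,m\}$: $I\in\mathcal{X}_\alpha$ if and only if there exists some $1\le i\le |I|$ such that $h_\alpha\, p_{(i:I)}\le i\alpha$.
   Context: Setting: $m$ hypotheses with $p$-values $p_1,\ldots,p_m\in[0,1]$. For $I\subseteq\{1,\ldots,m\}$ and $1\le i\le |I|$, $p_{(i:I)}$ denotes the $i$-th smallest value of the multiset $\{p_j: j\in I\}$. The Simes local test at level $\alpha$ rejects $I$ (written $I\in\mathcal{U}_\alpha$) iff there is $1\le i\le |I|$ with $|I|\,p_{(i:I)}\le i\alpha$ (so $\emptyset\notin\mathcal{U}_\alpha$). Closed testing: $\mathcal{X}_\alpha=\{I\subseteq\{1,\ldots,m\}: J\in\mathcal{U}_\alpha \text{ for all } J\supseteq I,\ J\subseteq\{1,\ldots,m\}\}$. Let $r_1,\ldots,r_m$ be a permutation of $1,\ldots,m$ with $p_{r_1}\le\cdots\le p_{r_m}$, and $K_i=\{r_{m-i+1},\ldots,r_m\}$ (indices of the $i$ largest $p$-values), $i=0,\ldots,m$. Define $h_\alpha=\max\{0\le i\le m: K_i\notin\mathcal{U}_\alpha\}$. *)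

theory Defs
  imports Complex_Main "HOL-Library.Multiset"
begin

definition pord :: "(nat \<Rightarrow> real) \<Rightarrow> nat set \<Rightarrow> nat \<Rightarrow> real" where
  "pord p I i = sorted_list_of_multiset (image_mset p (mset_set I)) ! (i - 1)"

definition simes_rej :: "real \<Rightarrow> (nat \<Rightarrow> real) \<Rightarrow> nat set \<Rightarrow> bool" where
  "simes_rej \<alpha> p I \<longleftrightarrow> (\<exists>i\<in>{1..card I}. real (card I) * pord p I i \<le> real i * \<alpha>)"

definition closed_rej :: "real \<Rightarrow> (nat \<Rightarrow> real) \<Rightarrow> nat \<Rightarrow> nat set set" where
  "closed_rej \<alpha> p m = {I. I \<subseteq> {1..m} \<and>
      (\<forall>J. I \<subseteq> J \<and> J \<subseteq> {1..m} \<longrightarrow> simes_rej \<alpha> p J)}"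

definition Kset :: "(nat \<Rightarrow> nat) \<Rightarrow> nat \<Rightarrow> nat \<Rightarrow> nat set" where
  "Kset r m i = r ` {m - i + 1..m}"

definition h_alpha :: "real \<Rightarrow> (nat \<Rightarrow> real) \<Rightarrow> (nat \<Rightarrow> nat) \<Rightarrow> nat \<Rightarrow> nat" where
  "h_alpha \<alpha> p r m = Max {i. i \<le> m \<and> \<not> simes_rej \<alpha> p (Kset r m i)}"

end

theory Submission
  imports Defs
begin

lemma L1:
  fixes S :: "nat set"
  assumes "finite S" "j < card S"
  shows "card {x\<in>S. x < sorted_list_of_set S ! j} = j"
proof -
  define xs where "xs = sorted_list_of_set S"
  have st: "sorted_wrt (<) xs" "distinct xs" "sorted xs" "set xs = S" "length xs = card S"
    using assms by (simp_all add: xs_def strict_sorted_list_of_set)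
  have "{x\<in>S. x < xs ! j} = (\<lambda>a. xs ! a) ` {..<j}"
  proof (rule set_eqI, rule iffI)
    fix x assume x: "x \<in> {x\<in>S. x < xs ! j}"
    then obtain a where a: "a < length xs" "x = xs ! a" using st(4) by (auto simp: in_set_conv_nth)
    have "a < j"
    proof (rule ccontr)
      assume "\<not> a < j" then have "xs ! j \<le> xs ! a" using st(3) a(1) by (simp add: sorted_nth_mono)
      with x a show False by auto
    qed
    then show "x \<in> (\<lambda>a. xs ! a) ` {..<j}" using a by auto
  next
    fix x assume "x \<in> (\<lambda>a. xs ! a) ` {..<j}"
    then obtain a where a: "a < j" "x = xs ! a" by auto
    then show "x \<in> {x\<in>S. x < xs ! j}" using st assms(2)
      by (auto simp: sorted_wrt_iff_nth_less)
  qed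
  moreover have "inj_on (\<lambda>a. xs ! a) {..<j}"
    using st(2) st(5) assms(2) by (auto simp: inj_on_def nth_eq_iff_index_eq)
  ultimately show ?thesis by (simp add: card_image xs_def)
qed
lemma L2:
  fixes S :: "nat set"
  assumes "finite S" "k \<in> S"
  shows "sorted_list_of_set S ! card {x\<in>S. x < k} = k"
proof -
  obtain j where j: "j < card S" "sorted_list_of_set S ! j = k"
    using assms by (metis in_set_conv_nth length_sorted_list_of_set set_sorted_list_of_set)
  then show ?thesis using L1[OF assms(1) j(1)] by simp
qed
lemma L3:
  fixes S S' :: "nat set"
  assumes "finite S'" "S \<subseteq> S'" "1 \<le> i" "i \<le> card S"
  shows "sorted_list_of_set S' ! (i-1) \<le> sorted_list_of_set S ! (i-1)"
proof (rule ccontr)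
  define k where "k = sorted_list_of_set S ! (i-1)"
  define k' where "k' = sorted_list_of_set S' ! (i-1)"
  assume "\<not> k' \<le> k"
  have fS: "finite S" using assms finite_subset by auto
  have cS': "i - 1 < card S'" using assms card_mono[OF assms(1,2)] by linarith
  have kS: "k \<in> S" unfolding k_def using fS assms
    by (metis Suc_le_eq Suc_pred' diff_less length_sorted_list_of_set nth_mem set_sorted_list_of_set zero_less_one less_le_trans)
  have c1: "card {x\<in>S. x < k} = i - 1" unfolding k_def using L1 fS assms by simp
  have "{x\<in>S. x \<le> k} = insert k {x\<in>S. x < k}" using kS by auto
  then have "card {x\<in>S. x \<le> k} = i" using c1 fS assms(3) by simp
  moreover have "{x\<in>S. x \<le> k} \<subseteq> {x\<in>S'. x < k'}" using \<open>\<not> k' \<le> k\<close> assms(2) by auto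
  moreover have "card {x\<in>S'. x < k'} = i - 1" unfolding k'_def using L1 assms(1) cS' by simp
  ultimately have "i \<le> i - 1" using card_mono[of "{x\<in>S'. x < k'}"] assms(1) by (metis (no_types, lifting) finite_subset mem_Collect_eq subsetI)
  then show False using assms(3) by simp
qed
lemma nat_ivt:
  fixes f :: "nat \<Rightarrow> nat"
  shows "f 0 \<le> c \<Longrightarrow> c \<le> f n \<Longrightarrow> (\<forall>t<n. f (Suc t) \<le> Suc (f t)) \<Longrightarrow> \<exists>t\<le>n. f t = c"
proof (induction n)
  case 0 then show ?case by auto
next
  case (Suc n)
  have st: "f (Suc n) \<le> Suc (f n)" using Suc.prems(3) by simp
  show ?case
  proof (cases "c \<le> f n")
    case True
    have "\<forall>t<n. f (Suc t) \<le> Suc (f t)" using Suc.prems(3) by simp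
    then obtain t where "t \<le> n" "f t = c" using Suc.IH Suc.prems(1) True by blast
    then show ?thesis by (intro exI[of _ t]) simp
  next
    case False then have "f (Suc n) = c" using Suc.prems(2) st by linarith
    then show ?thesis by blast
  qed
qed

lemma pord_rank:
  fixes p :: "nat \<Rightarrow> real"
  assumes "inj_on r A" "S \<subseteq> A" "finite S"
    and mono: "\<And>a b. a \<in> A \<Longrightarrow> b \<in> A \<Longrightarrow> a \<le> b \<Longrightarrow> p (r a) \<le> p (r b)"
    and "1 \<le> i" "i \<le> card S"
  shows "pord p (r ` S) i = p (r (sorted_list_of_set S ! (i-1)))"
proof -
  define xs where "xs = sorted_list_of_set S"
  have injS: "inj_on r S" using assms(1,2) inj_on_subset by blast
  have m1: "mset_set S = mset xs"
    unfolding xs_def by (metis mset_sorted_list_of_multiset sorted_list_of_mset_set)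
  have e: "image_mset p (mset_set (r ` S)) = mset (map p (map r xs))"
  proof -
    have e1: "mset_set (r ` S) = mset (map r xs)" by (metis image_mset_mset_set[OF injS] m1 mset_map)
    show ?thesis by (simp only: e1 mset_map)
  qed
  have sx: "sorted xs" and xA: "set xs \<subseteq> A" using assms(2,3) by (auto simp: xs_def)
  have "sorted (map p (map r xs))"
  proof (rule sorted_iff_nth_mono[THEN iffD2], intro allI impI)
    fix a b assume ab: "a \<le> b" "b < length (map p (map r xs))"
    then have lb: "a < length xs" "b < length xs" by simp_all
    have le: "xs ! a \<le> xs ! b" using sorted_nth_mono[OF sx ab(1) lb(2)] .
    have inA: "xs ! a \<in> A" "xs ! b \<in> A" using xA nth_mem[OF lb(1)] nth_mem[OF lb(2)] by blast+
    have "p (r (xs ! a)) \<le> p (r (xs ! b))" using mono[OF inA le] .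
    then show "map p (map r xs) ! a \<le> map p (map r xs) ! b" using lb by simp
  qed
  then have so: "sort (map p (map r xs)) = map p (map r xs)" by (rule sorted_sort_id)
  have "sorted_list_of_multiset (image_mset p (mset_set (r ` S))) = sort (map p (map r xs))"
    unfolding e by (rule sorted_list_of_multiset_mset)
  then have "sorted_list_of_multiset (image_mset p (mset_set (r ` S))) = map p (map r xs)"
    using so by simp
  moreover have "i - 1 < length xs" using assms(3,5,6) by (simp add: xs_def)
  ultimately show ?thesis by (simp add: pord_def xs_def)
qed

theorem lemma2:
  fixes p :: "nat \<Rightarrow> real" and \<alpha> :: real and m :: nat and r :: "nat \<Rightarrow> nat"
    and I :: "nat set"
  assumes p_range: "\<And>j. j \<in> {1..m} \<Longrightarrow> 0 \<le> p j \<and> p j \<le> 1"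
    and alpha_range: "0 \<le> \<alpha>" "\<alpha> \<le> 1"
    and r_perm: "bij_betw r {1..m} {1..m}"
    and r_sorted: "\<And>a b. a \<in> {1..m} \<Longrightarrow> b \<in> {1..m} \<Longrightarrow> a \<le> b \<Longrightarrow> p (r a) \<le> p (r b)"
    and I_sub: "I \<subseteq> {1..m}"
  shows "I \<in> closed_rej \<alpha> p m \<longleftrightarrow>
    (\<exists>i\<in>{1..card I}. real (h_alpha \<alpha> p r m) * pord p I i \<le> real i * \<alpha>)"
proof -
  define A where "A = {1..(m::nat)}"
  have inj: "inj_on r A" and rA: "r ` A = A" using r_perm by (auto simp: A_def bij_betw_def)
  define sl where "sl = (\<lambda>S::nat set. sorted_list_of_set S)"
  define \<sigma> where "\<sigma> = inv_into A r"
  have R_facts: "r ` (\<sigma> ` S) = S" "\<sigma> ` S \<subseteq> A" "card (\<sigma> ` S) = card S" if "S \<subseteq> A" for S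
  proof -
    show 1: "r ` (\<sigma> ` S) = S" using that rA unfolding \<sigma>_def
      by (simp add: image_image f_inv_into_f subset_iff cong: image_cong)
    show 2: "\<sigma> ` S \<subseteq> A" using that rA unfolding \<sigma>_def by (auto intro!: inv_into_into)
    have "card (r ` (\<sigma> ` S)) = card (\<sigma> ` S)" using 2 inj by (meson card_image inj_on_subset)
    then show "card (\<sigma> ` S) = card S" using 1 by simp
  qed
  have r_sortedA: "\<And>a b. a \<in> A \<Longrightarrow> b \<in> A \<Longrightarrow> a \<le> b \<Longrightarrow> p (r a) \<le> p (r b)"
    using r_sorted unfolding A_def by blast
  have pr: "pord p (r ` R) i = p (r (sl R ! (i-1)))" if "R \<subseteq> A" "1 \<le> i" "i \<le> card R" for R i
  proof -
    have fin: "finite R" using that(1) finite_subset by (auto simp: A_def)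
    show ?thesis using pord_rank[where p=p and r=r and A=A and S=R and i=i, OF inj that(1) fin r_sortedA that(2,3)] unfolding sl_def .
  qed
  have cardr: "card (r ` R) = card R" if "R \<subseteq> A" for R
    using that inj by (meson card_image inj_on_subset)
  have slA: "sl R ! (i-1) \<in> A" if "R \<subseteq> A" "1 \<le> i" "i \<le> card R" for R i
  proof -
    have "finite R" using that finite_subset[of R A] by (simp add: A_def)
    then have "sl R ! (i-1) \<in> R" using that unfolding sl_def
      by (metis Suc_le_eq Suc_pred' length_sorted_list_of_set nth_mem set_sorted_list_of_set zero_less_one less_le_trans)
    then show ?thesis using that by auto
  qed
  have pnn: "0 \<le> p (r x)" if "x \<in> A" for x
  proof -
    have "r x \<in> A" using that rA by blast
    then show ?thesis using p_range[of "r x"] unfolding A_def by blast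
  qed
  have rank_le: "sl R ! (i-1) \<le> m - card R + i" if "R \<subseteq> A" "1 \<le> i" "i \<le> card R" for R i
  proof -
    define k where "k = sl R ! (i-1)"
    have fR: "finite R" using that finite_subset[of R A] by (simp add: A_def)
    have kA: "k \<in> A" using slA[OF that] k_def by simp
    have c1: "card {x\<in>R. x < k} = i - 1" unfolding k_def sl_def using L1 fR that by simp
    have "R = {x\<in>R. x < k} \<union> {x\<in>R. k \<le> x}" by auto
    then have "card R = card {x\<in>R. x < k} + card {x\<in>R. k \<le> x}"
      using fR by (metis (no_types, lifting) card_Un_disjoint disjoint_iff finite_Un mem_Collect_eq not_le)
    moreover have "card {x\<in>R. k \<le> x} \<le> card {k..m}"
      using that(1) by (intro card_mono) (auto simp: A_def)
    ultimately have "card R \<le> i - 1 + (m + 1 - k)" using c1 by simp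
    then show ?thesis using kA that unfolding k_def[symmetric] by (simp add: A_def)
  qed
  define T where "T = (\<lambda>t. {m+1-t..(m::nat)})"
  have KT: "Kset r m s = r ` T s" if "s \<le> m" for s
    using that by (simp add: Kset_def T_def Suc_diff_le)
  have TA: "T s \<subseteq> A" if "s \<le> m" for s using that by (auto simp: T_def A_def)
  have cT: "card (T s) = s" if "s \<le> m" for s using that by (simp add: T_def)
  have slT: "sl (T s) ! (i-1) = m - s + i" if "s \<le> m" "1 \<le> i" "i \<le> s" for s i
  proof -
    have "{x\<in>T s. x < m - s + i} = {m+1-s..<m-s+i}" using that by (auto simp: T_def)
    then have "card {x\<in>T s. x < m - s + i} = i - 1" using that by simp
    moreover have "m - s + i \<in> T s" using that by (auto simp: T_def)
    ultimately show ?thesis using L2[of "T s" "m - s + i"] by (simp add: T_def sl_def)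
  qed
  define h where "h = h_alpha \<alpha> p r m"
  define H where "H = {i. i \<le> m \<and> \<not> simes_rej \<alpha> p (Kset r m i)}"
  have H0: "0 \<in> H" by (simp add: H_def Kset_def simes_rej_def)
  have Hfin: "finite H" by (simp add: H_def)
  have hMax: "h = Max H" unfolding h_def h_alpha_def H_def ..
  have Hne: "H \<noteq> {}" using H0 by blast
  have hH: "h \<in> H" using Max_in[OF Hfin Hne] hMax by simp
  have hmax: "\<And>i. i \<in> H \<Longrightarrow> i \<le> h" using Max_ge[OF Hfin] hMax by simp
  have hm: "h \<le> m" and hK: "\<not> simes_rej \<alpha> p (Kset r m h)" using hH by (auto simp: H_def)
  have Kh: "real h * p (r (m - h + i)) > real i * \<alpha>" if "1 \<le> i" "i \<le> h" for i
  proof -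
    have "\<not> (real h * pord p (r ` T h) i \<le> real i * \<alpha>)"
      using hK that KT[OF hm] cardr[OF TA[OF hm]] cT[OF hm] by (auto simp: simes_rej_def)
    then show ?thesis using pr[OF TA[OF hm] that(1)] cT[OF hm] slT[OF hm that] that by simp
  qed
  have big: "simes_rej \<alpha> p J" if "J \<subseteq> A" "h < card J" for J
  proof -
    define s where "s = card J"
    define R where "R = \<sigma> ` J"
    have JR: "J = r ` R" "R \<subseteq> A" "card R = s" using R_facts[OF that(1)] by (auto simp: R_def s_def)
    have sm: "s \<le> m" using that(1) unfolding s_def A_def by (metis card_atLeastAtMost card_mono finite_atLeastAtMost diff_Suc_1)
    have "s \<notin> H" using hmax that s_def by force
    then have "simes_rej \<alpha> p (r ` T s)" using sm KT by (simp add: H_def)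
    then obtain i where i: "1 \<le> i" "i \<le> s" "real s * pord p (r ` T s) i \<le> real i * \<alpha>"
      using cardr[OF TA[OF sm]] cT[OF sm] by (auto simp: simes_rej_def)
    then have e1: "real s * p (r (m - s + i)) \<le> real i * \<alpha>"
      using pr[OF TA[OF sm] i(1)] cT[OF sm] slT[OF sm i(1,2)] by simp
    have "sl R ! (i-1) \<le> m - s + i" using rank_le[OF JR(2) i(1)] JR i by simp
    moreover have "m - s + i \<in> A" using i sm by (auto simp: A_def)
    moreover have "sl R ! (i-1) \<in> A" using slA[OF JR(2) i(1)] JR(3) i(2) by simp
    ultimately have "p (r (sl R ! (i-1))) \<le> p (r (m - s + i))"
      using r_sorted[of "sl R ! (i-1)" "m - s + i"] unfolding A_def by blast
    then have "real s * p (r (sl R ! (i-1))) \<le> real i * \<alpha>"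
      using e1 by (meson mult_left_mono of_nat_0_le_iff order_trans)
    then have "real (card J) * pord p J i \<le> real i * \<alpha>"
      using JR pr[OF JR(2) i(1)] i(2) s_def by simp
    then show ?thesis unfolding simes_rej_def using i JR(3) s_def by (intro bexI[of _ i]) auto
  qed
  define RI where "RI = \<sigma> ` I"
  have IR: "I = r ` RI" "RI \<subseteq> A" "card RI = card I"
    using R_facts I_sub by (auto simp: RI_def A_def)
  have fA: "finite A" by (simp add: A_def)
  show ?thesis
  proof
    assume X: "I \<in> closed_rej \<alpha> p m"
    show "\<exists>i\<in>{1..card I}. real (h_alpha \<alpha> p r m) * pord p I i \<le> real i * \<alpha>"
    proof (rule ccontr)
      assume nex: "\<not> ?thesis"
      then have nI: "real i * \<alpha> < real h * p (r (sl RI ! (i-1)))" if "1 \<le> i" "i \<le> card I" for i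
      proof -
        have "\<not> (real h * pord p I i \<le> real i * \<alpha>)" using nex that by (auto simp: h_def)
        moreover have "pord p I i = p (r (sl RI ! (i-1)))" using pr[OF IR(2) that(1)] that(2) IR by simp
        ultimately show ?thesis by simp
      qed
      show False
      proof (cases "h \<le> card I")
        case True
        have "simes_rej \<alpha> p I" using X by (auto simp: closed_rej_def)
        then obtain i where i: "1 \<le> i" "i \<le> card I" "real (card I) * pord p I i \<le> real i * \<alpha>"
          by (auto simp: simes_rej_def)
        have "0 \<le> pord p I i" using pr[OF IR(2) i(1)] IR i pnn slA[OF IR(2) i(1)] by simp
        then have "real h * pord p I i \<le> real i * \<alpha>"
          using i(3) True by (meson mult_right_mono of_nat_le_iff order_trans)
        then show False using nex i by (auto simp: h_def)
      next
        case False
        define f where "f = (\<lambda>t. card (RI \<union> T t))"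
        have fRI: "finite RI" using IR(2) fA finite_subset by auto
        have "f 0 \<le> h" using False by (simp add: f_def T_def IR(3))
        moreover have "h \<le> f h"
        proof -
          have "card (T h) \<le> card (RI \<union> T h)" using fRI by (intro card_mono) (auto simp: T_def)
          then show ?thesis using cT[OF hm] by (simp add: f_def)
        qed
        moreover have "\<forall>t<h. f (Suc t) \<le> Suc (f t)"
        proof (intro allI impI)
          fix t assume "t < h"
          then have "T (Suc t) = insert (m - t) (T t)" using hm by (auto simp: T_def)
          then have eq: "RI \<union> T (Suc t) = insert (m - t) (RI \<union> T t)" by auto
          have fin: "finite (RI \<union> T t)" using fRI by (simp add: T_def)
          have "card (insert (m - t) (RI \<union> T t)) \<le> Suc (card (RI \<union> T t))"
            using fin by (simp add: card_insert_if)
          then show "f (Suc t) \<le> Suc (f t)" unfolding f_def eq .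
        qed
        ultimately obtain t where t: "t \<le> h" "f t = h" using nat_ivt[of f h h] by blast
        define R where "R = RI \<union> T t"
        have RA: "R \<subseteq> A" using IR(2) TA[of t] t hm R_def by auto
        have cR: "card R = h" using t f_def R_def by simp
        have fR: "finite R" using RA fA finite_subset by auto
        have s1: "I \<subseteq> r ` R" using IR(1) unfolding R_def by blast
        have s2: "r ` R \<subseteq> {1..m}" using RA rA unfolding A_def by blast
        have "simes_rej \<alpha> p (r ` R)" using X s1 s2 unfolding closed_rej_def by blast
        then obtain i where i0: "i \<in> {1..card (r ` R)}" "real (card (r ` R)) * pord p (r ` R) i \<le> real i * \<alpha>"
          unfolding simes_rej_def by blast
        have crR: "card (r ` R) = h" using cardr[OF RA] cR by simp
        have i: "1 \<le> i" "i \<le> h" using i0(1) crR by auto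
        have "pord p (r ` R) i = p (r (sl R ! (i-1)))" using pr[OF RA i(1)] i(2) cR by simp
        then have i3: "real h * p (r (sl R ! (i-1))) \<le> real i * \<alpha>" using i0(2) crR by simp
        note i = i i3
        define k where "k = sl R ! (i-1)"
        have "i - 1 < length (sorted_list_of_set R)" using fR i cR by simp
        then have "k \<in> set (sorted_list_of_set R)" unfolding k_def sl_def by (rule nth_mem)
        then have kR: "k \<in> R" using fR by simp
        have ck: "card {x\<in>R. x < k} = i - 1" unfolding k_def sl_def using L1 fR i cR by simp
        show False
        proof (cases "k < m + 1 - t")
          case True
          then have e: "{x\<in>R. x < k} = {x\<in>RI. x < k}" by (auto simp: R_def T_def)
          have kRI: "k \<in> RI" using kR True by (auto simp: R_def T_def)
          have "{x\<in>RI. x < k} \<subset> RI" using kRI by auto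
          then have "card {x\<in>RI. x < k} < card RI" using fRI by (simp add: psubset_card_mono)
          then have ii: "i \<le> card I" using e ck IR(3) i(1) by simp
          have "sl RI ! (i-1) = k" using L2[OF fRI kRI] e ck by (simp add: sl_def)
          then show False using nI[OF i(1) ii] i(3) k_def by simp
        next
          case False
          have km: "k \<le> m" using kR RA by (auto simp: A_def)
          have sub: "{k..m} \<subseteq> R" using False by (auto simp: R_def T_def)
          have "{x\<in>R. x < k} = R - {k..m}" using RA by (auto simp: A_def)
          then have "card {x\<in>R. x < k} = h - (m + 1 - k)"
            using sub fR cR by (simp add: card_Diff_subset)
          moreover have "card {k..m} \<le> h" using card_mono[OF fR sub] cR by simp
          ultimately have "k = m - h + i" using ck km i hm by simp
          then show False using Kh[OF i(1,2)] i(3) k_def by simp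
        qed
      qed
    qed
  next
    assume "\<exists>i\<in>{1..card I}. real (h_alpha \<alpha> p r m) * pord p I i \<le> real i * \<alpha>"
    then obtain i where i: "1 \<le> i" "i \<le> card I" "real h * pord p I i \<le> real i * \<alpha>"
      by (auto simp: h_def)
    show "I \<in> closed_rej \<alpha> p m"
      unfolding closed_rej_def
    proof (intro CollectI conjI allI impI)
      show "I \<subseteq> {1..m}" by (rule I_sub)
      fix J assume J: "I \<subseteq> J \<and> J \<subseteq> {1..m}"
      show "simes_rej \<alpha> p J"
      proof (cases "h < card J")
        case True then show ?thesis using big J by (simp add: A_def)
      next
        case False
        define RJ where "RJ = \<sigma> ` J"
        have JR: "J = r ` RJ" "RJ \<subseteq> A" "card RJ = card J"
          using R_facts J by (auto simp: RJ_def A_def)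
        have sub: "RI \<subseteq> RJ" using J by (auto simp: RI_def RJ_def)
        have fRJ: "finite RJ" using JR(2) fA finite_subset by auto
        have cI: "card I \<le> card J" using J fA by (metis A_def card_mono finite_subset)
        have "sl RJ ! (i-1) \<le> sl RI ! (i-1)"
          using L3[OF fRJ sub i(1)] i IR by (simp add: sl_def)
        moreover have "sl RJ ! (i-1) \<in> A" using slA[OF JR(2) i(1)] i JR cI by simp
        moreover have "sl RI ! (i-1) \<in> A" using slA[OF IR(2) i(1)] i IR by simp
        ultimately have le1: "p (r (sl RJ ! (i-1))) \<le> p (r (sl RI ! (i-1)))"
          using r_sorted[of "sl RJ ! (i-1)" "sl RI ! (i-1)"] unfolding A_def by blast
        have nn: "0 \<le> p (r (sl RJ ! (i-1)))" using pnn slA[OF JR(2) i(1)] i JR cI by simp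
        have "real (card J) * p (r (sl RJ ! (i-1))) \<le> real h * p (r (sl RI ! (i-1)))"
          using False le1 nn by (intro mult_mono) auto
        also have "\<dots> \<le> real i * \<alpha>" using i pr[OF IR(2) i(1)] IR by simp
        finally have "real (card J) * pord p J i \<le> real i * \<alpha>"
          using pr[OF JR(2) i(1)] JR i cI by simp
        then show ?thesis unfolding simes_rej_def using i cI by (intro bexI[of _ i]) auto
      qed
    qed
  qed
qed


end
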